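(* For $n\ge 3$, let $P'_n$ be the graph on vertices $v_1,\dots,v_{n+1}$ whose edges are $\{v_i,v_{i+1}\}$ for $1\le i\le n-1$ together with $\{v_{n-1},v_{n+1}\}$ (a path on $n$ vertices with a pendant vertex attached to its second-to-last vertex). Then: (a) if $n\ge 3$ and $n\equiv 0 \pmod 3$, then $\mathrm{mur}(P'_n)=n-2$; (b) if $n\ge 6$ and $n+1=4k$ for some integer $k$, then $\mathrm{mur}(P'_n)=n-2$.
   Context: For a finite simple undirected graph $G$ on vertices $v_1,\dots,v_n$, let $A_G$ be its $(0,1)$-adjacency matrix, $D_G=\mathrm{diag}(d_1,\dots,d_n)$ with $d_i$ the degree of $v_i$, $I$ the $n\times n$ identity matrix and $J$ the $n\times n$ all-ones matrix. A universal adjacency matrix of $G$ is any matrix $\alpha A_G+\beta I+\gamma J+\delta D_G$ with real scalars $\alpha,\beta,\gamma,\delta$ and $\alpha\neq 0$. The minimum universal rank $\mathrm{mur}(G)$ is the minimum rank over all universal adjacency matrices of $G$. *)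

theory Defs
  imports Jordan_Normal_Form.DL_Rank
begin

text \<open>A finite simple graph on vertex set {0..<N} is given by an adjacency predicate
  E (assumed symmetric and irreflexive for the graphs we use).  Vertex v_i of the
  paper corresponds to index i-1.\<close>

definition adj_mat :: "nat \<Rightarrow> (nat \<Rightarrow> nat \<Rightarrow> bool) \<Rightarrow> real mat" where
  "adj_mat N E = mat N N (\<lambda>(i,j). if E i j then 1 else 0)"

definition degree :: "nat \<Rightarrow> (nat \<Rightarrow> nat \<Rightarrow> bool) \<Rightarrow> nat \<Rightarrow> nat" where
  "degree N E i = card {j. j < N \<and> E i j}"

definition deg_mat :: "nat \<Rightarrow> (nat \<Rightarrow> nat \<Rightarrow> bool) \<Rightarrow> real mat" where
  "deg_mat N E = mat N N (\<lambda>(i,j). if i = j then real (degree N E i) else 0)"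

definition all_ones_mat :: "nat \<Rightarrow> real mat" where
  "all_ones_mat N = mat N N (\<lambda>_. 1)"

definition univ_adj_mat ::
  "nat \<Rightarrow> (nat \<Rightarrow> nat \<Rightarrow> bool) \<Rightarrow> real \<Rightarrow> real \<Rightarrow> real \<Rightarrow> real \<Rightarrow> real mat" where
  "univ_adj_mat N E \<alpha> \<beta> \<gamma> \<delta> =
     \<alpha> \<cdot>\<^sub>m adj_mat N E + \<beta> \<cdot>\<^sub>m (1\<^sub>m N) + \<gamma> \<cdot>\<^sub>m all_ones_mat N + \<delta> \<cdot>\<^sub>m deg_mat N E"

definition mat_rank :: "real mat \<Rightarrow> nat" where
  "mat_rank A = vec_space.rank (dim_row A) A"

definition mur :: "nat \<Rightarrow> (nat \<Rightarrow> nat \<Rightarrow> bool) \<Rightarrow> nat" where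
  "mur N E = Min {mat_rank (univ_adj_mat N E \<alpha> \<beta> \<gamma> \<delta>) | \<alpha> \<beta> \<gamma> \<delta>. \<alpha> \<noteq> 0}"

definition Pprime_edge :: "nat \<Rightarrow> nat \<Rightarrow> nat \<Rightarrow> bool" where
  "Pprime_edge n i j \<longleftrightarrow>
     (i + 1 = j \<and> j \<le> n - 1) \<or> (j + 1 = i \<and> i \<le> n - 1) \<or>
     (i = n - 2 \<and> j = n) \<or> (i = n \<and> j = n - 2)"

end

theory Submission
  imports Defs Jordan_Normal_Form.DL_Rank_Submatrix
begin
lemma nbs:
  assumes "n \<ge> 3" "i < n+1"
  shows "{k. k < n+1 \<and> Pprime_edge n i k} = (if i = 0 then {1} else if i \<le> n-3 then {i-1, i+1}
     else if i = n-2 then {n-3, n-1, n} else {n-2})"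
  using assms unfolding Pprime_edge_def by (auto split: if_splits)

definition nb :: "nat \<Rightarrow> (nat \<Rightarrow> real) \<Rightarrow> nat \<Rightarrow> real" where
 "nb n u i = (if i = 0 then u 1 else if i \<le> n-3 then u (i-1) + u (i+1)
    else if i = n-2 then u (n-3) + u (n-1) + u n else u (n-2))"

definition degf :: "nat \<Rightarrow> nat \<Rightarrow> nat" where
 "degf n i = (if i = 0 then 1 else if i \<le> n-3 then 2 else if i = n-2 then 3 else 1)"

lemma degree_eq:
  assumes "n \<ge> 3" "i < n+1"
  shows "degree (n+1) (Pprime_edge n) i = degf n i"
  unfolding degree_def nbs[OF assms] degf_def using assms by auto

lemma nb_sum:
  assumes "n \<ge> 3" "i < n+1"
  shows "(\<Sum>k<n+1. (if Pprime_edge n i k then 1 else 0) * u k) = nb n u i"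
proof -
  have "(\<Sum>k<n+1. (if Pprime_edge n i k then 1 else 0) * u k) = (\<Sum>k\<in>{k. k < n+1 \<and> Pprime_edge n i k}. u k)"
  proof -
    have "(\<Sum>k<n+1. (if Pprime_edge n i k then 1 else 0) * u k) = (\<Sum>k<n+1. (if Pprime_edge n i k then u k else 0))"
      by (intro sum.cong) auto
    also have "\<dots> = (\<Sum>k\<in>{k \<in> {..<n+1}. Pprime_edge n i k}. u k)"
      by (subst sum.inter_filter) auto
    also have "{k \<in> {..<n+1}. Pprime_edge n i k} = {k. k < n+1 \<and> Pprime_edge n i k}" by auto
    finally show ?thesis .
  qed
  also have "\<dots> = nb n u i"
    unfolding nbs[OF assms] nb_def using assms by auto
  finally show ?thesis .
qed

lemma entry:
  assumes "i < N" "k < N"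
  shows "univ_adj_mat N E a b c d $$ (i,k) = a * (if E i k then 1 else 0) + b * (if i = k then 1 else 0) + c
      + d * (if i = k then real (degree N E i) else 0)"
  using assms unfolding univ_adj_mat_def adj_mat_def all_ones_mat_def deg_mat_def
  by simp

lemma row:
  assumes "n \<ge> 3" "i < n+1"
  shows "(\<Sum>k<n+1. univ_adj_mat (n+1) (Pprime_edge n) a b c d $$ (i,k) * u k)
     = a * nb n u i + (b + d * degf n i) * u i + c * (\<Sum>k<n+1. u k)"
proof -
  have "(\<Sum>k<n+1. univ_adj_mat (n+1) (Pprime_edge n) a b c d $$ (i,k) * u k)
     = (\<Sum>k<n+1. a * ((if Pprime_edge n i k then 1 else 0) * u k) + (b + d * degf n i) * (if i = k then u k else 0) + c * u k)"
    using assms degree_eq[OF assms] by (intro sum.cong) (auto simp: entry algebra_simps)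
  also have "\<dots> = a * (\<Sum>k<n+1. (if Pprime_edge n i k then 1 else 0) * u k) + (b + d * degf n i) * (\<Sum>k<n+1. if i = k then u k else 0) + c * (\<Sum>k<n+1. u k)"
    by (simp only: sum.distrib sum_distrib_left)
  also have "(\<Sum>k<n+1. if i = k then u k else 0) = u i"
    using assms by (subst sum.delta') auto
  finally show ?thesis using nb_sum[OF assms] by simp
qed
lemma dummy: True
  by simp

lemma sum_split4:
  fixes f :: "nat \<Rightarrow> 'a::comm_monoid_add"
  shows "(\<Sum>k<Suc (Suc (Suc (Suc m))). f k) = f 0 + f 1 + (\<Sum>k<Suc m. f (Suc (Suc k))) + f (Suc (Suc (Suc m)))"
proof -
  have "(\<Sum>k<Suc(Suc(Suc(Suc m))). f k) = (\<Sum>k<Suc(Suc(Suc m)). f k) + f (Suc(Suc(Suc m)))" by (rule sum.lessThan_Suc)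
  also have "(\<Sum>k<Suc(Suc(Suc m)). f k) = f 0 + (\<Sum>k<Suc(Suc m). f (Suc k))" by (rule sum.lessThan_Suc_shift)
  also have "(\<Sum>k<Suc(Suc m). f (Suc k)) = f 1 + (\<Sum>k<Suc m. f (Suc (Suc k)))" by (subst sum.lessThan_Suc_shift) simp
  finally show ?thesis by (simp add: add.assoc del: sum.lessThan_Suc)
qed

context vec_space begin

lemma rank_upper:
  fixes M :: "'a mat"
  assumes M: "M \<in> carrier_mat n n" and n4: "n \<ge> 4"
  and K: "\<And>j. j \<in> {0,1,n-1} \<Longrightarrow> \<exists>u. (\<forall>i<n. (\<Sum>k<n. M$$(i,k) * u k) = 0) \<and> u j = 1 \<and> (\<forall>p\<in>{0,1,n-1}. p \<noteq> j \<longrightarrow> u p = 0)"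
  shows "rank M \<le> n - 3"
proof -
  define m where "m = n - 4"
  have nm: "n = Suc (Suc (Suc (Suc m)))" unfolding m_def using n4 by presburger
  define ws where "ws = map (\<lambda>k. col M (k+2)) [0..<n-3]"
  have wsC: "set ws \<subseteq> carrier_vec n" unfolding ws_def using M by auto
  have lws: "length ws = n - 3" unfolding ws_def by simp
  have sub: "set ws \<subseteq> set (cols M)" unfolding ws_def cols_def using M by auto
  have colsC: "set (cols M) \<subseteq> carrier_vec n" using M cols_dim by (metis carrier_matD(1))
  have incl: "set (cols M) \<subseteq> span (set ws)"
  proof
    fix v assume "v \<in> set (cols M)"
    then obtain j where j: "j < n" "v = col M j" using M unfolding cols_def by auto
    show "v \<in> span (set ws)"
    proof (cases "j \<in> {0,1,n-1}")
      case False
      then have jj: "j - 2 < n - 3" "(j-2)+2 = j" using j by auto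
      then have "v \<in> set ws" unfolding ws_def set_map using j(2)
        by (metis atLeastLessThan_iff image_eqI le0 set_upt)
      then show ?thesis using in_own_span[OF wsC] by auto
    next
      case True
      from K[OF True] obtain u where u: "\<And>i. i<n \<Longrightarrow> (\<Sum>k<n. M$$(i,k) * u k) = 0" "u j = 1"
        "\<And>p. p\<in>{0,1,n-1} \<Longrightarrow> p \<noteq> j \<Longrightarrow> u p = 0" by blast
      define c where "c = (\<lambda>k. - u (k+2))"
      have "v = mat_of_cols n ws *\<^sub>v vec (length ws) c"
      proof (rule eq_vecI)
        show "dim_vec v = dim_vec (mat_of_cols n ws *\<^sub>v vec (length ws) c)" using j M by simp
        fix i assume "i < dim_vec (mat_of_cols n ws *\<^sub>v vec (length ws) c)"
        then have i: "i < n" by simp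
        have "(mat_of_cols n ws *\<^sub>v vec (length ws) c) $ i = (\<Sum>k<n-3. M $$ (i, k+2) * c k)"
          using i M unfolding mult_mat_vec_def scalar_prod_def lws
          by (auto simp: ws_def mat_of_cols_index lessThan_atLeast0 intro!: sum.cong)
        also have "\<dots> = - (\<Sum>k<n-3. M $$ (i, k+2) * u (k+2))" unfolding c_def by (simp add: sum_negf)
        also have "\<dots> = M $$ (i,0) * u 0 + M $$ (i,1) * u 1 + M $$ (i,n-1) * u (n-1)"
        proof -
          have e: "(\<Sum>k<n. M$$(i,k)*u k) = M$$(i,0)*u 0 + M$$(i,1)*u 1 + (\<Sum>k<n-3. M$$(i,k+2)*u(k+2)) + M$$(i,n-1)*u(n-1)"
            unfolding nm using sum_split4[of "\<lambda>k. M$$(i,k)*u k" m] by (simp del: sum.lessThan_Suc)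
          show ?thesis using u(1)[OF i] unfolding e by (simp add: neg_eq_iff_add_eq_0 ac_simps)
        qed
        also have "\<dots> = M $$ (i,j)" using True u(2) u(3) nm by auto
        finally show "v $ i = (mat_of_cols n ws *\<^sub>v vec (length ws) c) $ i" using j i M by simp
      qed
      also have "\<dots> = lincomb_list c ws" proof -
        have "\<forall>w\<in>set ws. dim_vec w = n" using wsC by auto
        from lincomb_list_as_mat_mult[OF this, of c] show ?thesis by simp
      qed
      also have "\<dots> \<in> span_list ws" by (rule in_span_listI) auto
      finally show ?thesis using span_list_as_span[OF wsC] by simp
    qed
  qed
  have "span (set (cols M)) = span (set ws)"
  proof
    show "span (set (cols M)) \<subseteq> span (set ws)" using span_subsetI[OF wsC incl] .
    show "span (set ws) \<subseteq> span (set (cols M))" using span_is_monotone[OF sub] .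
  qed
  then have "rank M = rank (mat_of_cols n ws)" unfolding rank_def using wsC by simp
  also have "\<dots> \<le> length ws" by (rule rank_le_nc) simp
  finally show ?thesis using lws by simp
qed
end

lemma pick_interval: "i < b - a \<Longrightarrow> pick {a..<b} i = a + i"
proof (induction i)
  case 0
  then show ?case by (auto intro!: Least_equality)
next
  case (Suc i)
  then have "pick {a..<b} i = a + i" by simp
  then show ?case using Suc.prems by (simp, intro Least_equality) auto
qed

definition Bmat :: "nat \<Rightarrow> (nat \<Rightarrow> nat \<Rightarrow> bool) \<Rightarrow> real \<Rightarrow> real \<Rightarrow> real \<Rightarrow> real mat" where
  "Bmat N E a b d = a \<cdot>\<^sub>m adj_mat N E + b \<cdot>\<^sub>m (1\<^sub>m N) + d \<cdot>\<^sub>m deg_mat N E"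

lemma Bmat_carrier: "Bmat N E a b d \<in> carrier_mat N N"
  unfolding Bmat_def adj_mat_def deg_mat_def by auto

lemma Bmat_dims[simp]: "dim_row (Bmat N E a b d) = N" "dim_col (Bmat N E a b d) = N"
  unfolding Bmat_def adj_mat_def deg_mat_def by simp_all

lemma Bmat_index: "i < N \<Longrightarrow> k < N \<Longrightarrow> Bmat N E a b d $$ (i,k) =
   a * (if E i k then 1 else 0) + b * (if i = k then 1 else 0) + d * (if i = k then real (degree N E i) else 0)"
  unfolding Bmat_def adj_mat_def deg_mat_def by simp

lemma univ_eq: "univ_adj_mat N E a b c d = Bmat N E a b d + c \<cdot>\<^sub>m all_ones_mat N"
  unfolding univ_adj_mat_def Bmat_def all_ones_mat_def adj_mat_def deg_mat_def
  by (rule eq_matI) auto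

lemma rank_lower:
  assumes n: "n \<ge> 3" and a: "a \<noteq> 0"
  shows "n - 2 \<le> vec_space.rank (n+1) (univ_adj_mat (n+1) (Pprime_edge n) a b c d)"
proof -
  let ?N = "n+1"
  let ?B = "Bmat ?N (Pprime_edge n) a b d"
  let ?M = "univ_adj_mat ?N (Pprime_edge n) a b c d"
  let ?J = "(-c) \<cdot>\<^sub>m all_ones_mat ?N"
  have BC: "?B \<in> carrier_mat ?N ?N" by (rule Bmat_carrier)
  have JC: "?J \<in> carrier_mat ?N ?N" unfolding all_ones_mat_def by auto
  have MC: "?M \<in> carrier_mat ?N ?N" unfolding univ_eq using BC JC unfolding all_ones_mat_def by auto
  have BMJ: "?B = ?M + ?J" unfolding univ_eq all_ones_mat_def
    by (rule eq_matI) (auto simp: Bmat_index)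
  have rJ: "vec_space.rank ?N ?J \<le> 1"
    by (rule vec_space.rank_le_1_product_entries[OF JC, of "\<lambda>_. -c" "\<lambda>_. 1"])
       (auto simp: all_ones_mat_def)
  have rB: "vec_space.rank ?N ?B \<le> vec_space.rank ?N ?M + vec_space.rank ?N ?J"
    unfolding BMJ by (rule vec_space.rank_subadditive[OF MC JC])
  define S where "S = submatrix ?B {0..<n-1} {1..<n}"
  have cardI: "card {i. i < dim_row ?B \<and> i \<in> {0..<n-1}} = n - 1"
  proof -
    have "{i. i < dim_row ?B \<and> i \<in> {0..<n-1}} = {0..<n-1}" using BC by auto
    then show ?thesis by simp
  qed
  have cardJ: "card {j. j < dim_col ?B \<and> j \<in> {1..<n}} = n - 1"
  proof -
    have "{j. j < dim_col ?B \<and> j \<in> {1..<n}} = {1..<n}" using BC by auto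
    then show ?thesis by simp
  qed
  have SC: "S \<in> carrier_mat (n-1) (n-1)"
  proof (rule carrier_matI)
    show "dim_row S = n-1" unfolding S_def dim_submatrix(1) using cardI .
    show "dim_col S = n-1" unfolding S_def dim_submatrix(2) using cardJ .
  qed
  have Sidx: "S $$ (i,j) = ?B $$ (i, j+1)" if "i < n-1" "j < n-1" for i j
  proof -
    have "S $$ (i,j) = ?B $$ (pick {0..<n-1} i, pick {1..<n} j)"
      unfolding S_def using that cardI cardJ by (intro submatrix_index) auto
    also have "pick {0..<n-1} i = i" using pick_interval[of i "n-1" 0] that by simp
    also have "pick {1..<n} j = j + 1" using pick_interval[of j n 1] that by simp
    finally show ?thesis .
  qed
  have up: "S $$ (i,j) = 0" if "i < j" "j < n-1" for i j
  proof -
    have "\<not> Pprime_edge n i (j+1)" using that unfolding Pprime_edge_def by auto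
    then show ?thesis using Sidx[of i j] Bmat_index[of i "n+1" "j+1"] that by simp
  qed
  have "det S = prod_list (diag_mat S)" by (rule det_lower_triangular[OF up SC])
  also have "diag_mat S = map (\<lambda>i. a) [0..<n-1]"
  proof -
    have "S $$ (i,i) = a" if "i < n-1" for i
    proof -
      have "Pprime_edge n i (i+1)" using that unfolding Pprime_edge_def by auto
      then show ?thesis using Sidx[OF that that] Bmat_index[of i "n+1" "i+1"] that by simp
    qed
    then show ?thesis unfolding diag_mat_def using SC by (intro map_cong) auto
  qed
  finally have "det S = a ^ (n-1)" by (simp add: prod_list_replicate map_replicate_const)
  then have "det S \<noteq> 0" using a by simp
  then have "card {j. j < ?N \<and> j \<in> {1..<n}} \<le> vec_space.rank ?N ?B"
    unfolding S_def by (rule vec_space.rank_gt_minor[OF BC])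
  moreover have "card {j. j < ?N \<and> j \<in> {1..<n}} = n - 1" using cardJ BC by simp
  ultimately show ?thesis using rB rJ by linarith
qed
fun qf :: "nat \<Rightarrow> real" where
  "qf 0 = 1" | "qf (Suc 0) = 0" | "qf (Suc (Suc m)) = qf (Suc m) - qf m"

fun rf :: "nat \<Rightarrow> real" where
  "rf 0 = 1" | "rf (Suc 0) = 0" | "rf (Suc (Suc m)) = - rf m"

fun sf :: "nat \<Rightarrow> real" where
  "sf 0 = 0" | "sf (Suc 0) = 1" | "sf (Suc (Suc m)) = 1 - sf m"

lemma qf_facts: "qf (3*j+1) = 0 \<and> (\<Sum>k<3*j. qf k) = 0"
proof (induction j)
  case 0 then show ?case by simp
next
  case (Suc j)
  have e1: "3 * Suc j + 1 = Suc (Suc (Suc (3*j+1)))" by simp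
  have e2: "3 * Suc j = Suc (Suc (Suc (3*j)))" by simp
  have q2: "qf (3*j+2) = qf (3*j+1) - qf (3*j)" by (simp add: numeral_2_eq_2)
  have "qf (3 * Suc j + 1) = - qf (3*j+1)" unfolding e1 by simp
  moreover have "(\<Sum>k<3 * Suc j. qf k) = (\<Sum>k<3*j. qf k) + qf (3*j) + qf (3*j+1) + qf (3*j+2)"
    unfolding e2 by (simp add: numeral_2_eq_2)
  ultimately show ?case using Suc.IH q2 by simp
qed

lemma rf_facts: "(\<Sum>k<4*j. rf k) = 0 \<and> rf (4*j) = 1 \<and> rf (4*j+1) = 0"
proof (induction j)
  case 0 then show ?case by simp
next
  case (Suc j)
  have e2: "4 * Suc j = Suc (Suc (Suc (Suc (4*j))))" by simp
  have "(\<Sum>k<4 * Suc j. rf k) = (\<Sum>k<4*j. rf k) + rf (4*j) + rf (Suc (4*j)) + rf (Suc (Suc (4*j))) + rf (Suc (Suc (Suc (4*j))))"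
    unfolding e2 by simp
  then show ?case using Suc.IH unfolding e2 by simp
qed

lemma sf_facts: "(\<Sum>k<4*j. sf k) = 2 * real j \<and> sf (4*j) = 0 \<and> sf (4*j+1) = 1"
proof (induction j)
  case 0 then show ?case by simp
next
  case (Suc j)
  have e2: "4 * Suc j = Suc (Suc (Suc (Suc (4*j))))" by simp
  have "(\<Sum>k<4 * Suc j. sf k) = (\<Sum>k<4*j. sf k) + sf (4*j) + sf (Suc (4*j)) + sf (Suc (Suc (4*j))) + sf (Suc (Suc (Suc (4*j))))"
    unfolding e2 by simp
  then show ?case using Suc.IH unfolding e2 by simp
qed

definition kz :: "nat \<Rightarrow> real \<Rightarrow> real \<Rightarrow> real \<Rightarrow> (nat \<Rightarrow> real) \<Rightarrow> bool" where
  "kz n b c d u \<longleftrightarrow> (\<forall>i<n+1. nb n u i + (b + d * degf n i) * u i + c * (\<Sum>k<n+1. u k) = 0)"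

lemma kzI:
  assumes n: "n \<ge> 3"
  and r0: "u 1 + (b + d) * u 0 + c * (\<Sum>k<n+1. u k) = 0"
  and rm: "\<And>i. 1 \<le> i \<Longrightarrow> i \<le> n-3 \<Longrightarrow> u (i-1) + u (i+1) + (b + 2*d) * u i + c * (\<Sum>k<n+1. u k) = 0"
  and r2: "u (n-3) + u (n-1) + u n + (b + 3*d) * u (n-2) + c * (\<Sum>k<n+1. u k) = 0"
  and r1: "u (n-2) + (b + d) * u (n-1) + c * (\<Sum>k<n+1. u k) = 0"
  and rn: "u (n-2) + (b + d) * u n + c * (\<Sum>k<n+1. u k) = 0"
  shows "kz n b c d u"
  unfolding kz_def
proof (intro allI impI)
  fix i assume i: "i < n+1"
  consider "i = 0" | "1 \<le> i \<and> i \<le> n-3" | "i = n-2" | "i = n-1" | "i = n" using i n by linarith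
  then show "nb n u i + (b + d * real (degf n i)) * u i + c * (\<Sum>k<n+1. u k) = 0"
  proof cases
    case 1 then show ?thesis using r0 unfolding nb_def degf_def by simp
  next
    case 2 then show ?thesis using rm[of i] unfolding nb_def degf_def by (simp add: mult.commute)
  next
    case 3
    have "n - 2 \<noteq> 0" "\<not> n - 2 \<le> n - 3" using n by auto
    then show ?thesis using r2 3 unfolding nb_def degf_def by (simp add: mult.commute)
  next
    case 4
    have "n - 1 \<noteq> 0" "\<not> n - 1 \<le> n - 3" "n - 1 \<noteq> n - 2" using n by auto
    then show ?thesis using r1 4 unfolding nb_def degf_def by simp
  next
    case 5
    have "n \<noteq> 0" "\<not> n \<le> n - 3" "n \<noteq> n - 2" using n by auto
    then show ?thesis using rn 5 unfolding nb_def degf_def by simp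
  qed
qed

lemma nb_add: "nb n (\<lambda>k. u k + v k) i = nb n u i + nb n v i"
  unfolding nb_def by simp
lemma nb_neg: "nb n (\<lambda>k. - u k) i = - nb n u i"
  unfolding nb_def by simp

lemma kz_add: assumes "kz n b c d u" "kz n b c d v" shows "kz n b c d (\<lambda>k. u k + v k)"
  unfolding kz_def
proof (intro allI impI)
  fix i assume i: "i < n+1"
  have "nb n u i + (b + d * degf n i) * u i + c * (\<Sum>k<n+1. u k) = 0"
       "nb n v i + (b + d * degf n i) * v i + c * (\<Sum>k<n+1. v k) = 0"
    using assms i unfolding kz_def by auto
  then show "nb n (\<lambda>k. u k + v k) i + (b + d * degf n i) * (u i + v i) + c * (\<Sum>k<n+1. u k + v k) = 0"
    unfolding nb_add sum.distrib by (simp add: algebra_simps)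
qed

lemma kz_neg: assumes "kz n b c d u" shows "kz n b c d (\<lambda>k. - u k)"
  unfolding kz_def
proof (intro allI impI)
  fix i assume i: "i < n+1"
  have "nb n u i + (b + d * degf n i) * u i + c * (\<Sum>k<n+1. u k) = 0"
    using assms i unfolding kz_def by auto
  then show "nb n (\<lambda>k. - u k) i + (b + d * degf n i) * (- u i) + c * (\<Sum>k<n+1. - u k) = 0"
    unfolding nb_neg sum_negf by (simp add: algebra_simps)
qed

definition K2 :: "nat \<Rightarrow> nat \<Rightarrow> real" where
  "K2 n i = (if i = n-1 then 1 else if i = n then -1 else 0)"

lemma K2_sum: assumes "n \<ge> 3" shows "(\<Sum>k<n+1. K2 n k) = 0"
proof -
  have e: "Suc (n-1) = n" using assms by auto
  have "(\<Sum>k<n+1. K2 n k) = (\<Sum>k<n. K2 n k) + K2 n n" by simp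
  also have "(\<Sum>k<n. K2 n k) = (\<Sum>k<n-1. K2 n k) + K2 n (n-1)"
    using sum.lessThan_Suc[of "K2 n" "n-1"] unfolding e .
  also have "(\<Sum>k<n-1. K2 n k) = 0" by (intro sum.neutral) (auto simp: K2_def)
  finally show ?thesis using assms by (simp add: K2_def)
qed

lemma kz_K2: assumes n: "n \<ge> 3" and bd: "b + d = 0" shows "kz n b c d (K2 n)"
proof (rule kzI[OF n])
  have nn: "n - 1 \<noteq> n" "n - 2 \<noteq> n" "n - 2 \<noteq> n - 1" "n - 3 \<noteq> n" "n - 3 \<noteq> n - 1" "1 \<noteq> n - 1" "1 \<noteq> n"
    "0 \<noteq> n - 1" "0 \<noteq> n" using n by auto
  have v: "K2 n 0 = 0" "K2 n 1 = 0" "K2 n (n-3) = 0" "K2 n (n-2) = 0" "K2 n (n-1) = 1" "K2 n n = -1"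
    using nn unfolding K2_def by auto
  have S: "c * (\<Sum>k<n+1. K2 n k) = 0" using K2_sum[OF n] by simp
  show "K2 n 1 + (b + d) * K2 n 0 + c * (\<Sum>k<n+1. K2 n k) = 0" unfolding S v by simp
  show "K2 n (i-1) + K2 n (i+1) + (b + 2*d) * K2 n i + c * (\<Sum>k<n+1. K2 n k) = 0"
    if "1 \<le> i" "i \<le> n-3" for i
  proof -
    have "i - 1 < n - 1" "i + 1 < n - 1" "i < n - 1" using that n by auto
    then have "K2 n (i-1) = 0" "K2 n (i+1) = 0" "K2 n i = 0" unfolding K2_def by auto
    then show ?thesis unfolding S by simp
  qed
  show "K2 n (n-3) + K2 n (n-1) + K2 n n + (b + 3*d) * K2 n (n-2) + c * (\<Sum>k<n+1. K2 n k) = 0"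
    unfolding S v by simp
  show "K2 n (n-2) + (b + d) * K2 n (n-1) + c * (\<Sum>k<n+1. K2 n k) = 0"
    unfolding S v using bd by simp
  show "K2 n (n-2) + (b + d) * K2 n n + c * (\<Sum>k<n+1. K2 n k) = 0"
    unfolding S v using bd by simp
qed

lemma qf_rec: "qf (Suc (Suc m)) = qf (Suc m) - qf m" by simp

definition K1a :: "nat \<Rightarrow> nat \<Rightarrow> real" where "K1a n i = (if i < n then qf i else 0)"

lemma kz_K1a: assumes n: "n \<ge> 3" "n mod 3 = 0" shows "kz n 1 c (-1) (K1a n)"
proof -
  obtain j where j: "n = 3*j" using n(2) by auto
  have jpos: "j \<ge> 1" using n j by simp
  have sum0: "(\<Sum>k<n+1. K1a n k) = 0"
    using qf_facts[of j] unfolding K1a_def j by simp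
  have "n - 2 = 3*(j-1)+1" using j jpos by simp
  then have qn2: "qf (n-2) = 0" using qf_facts[of "j-1"] by simp
  have e: "n-1 = Suc (Suc (n-3))" "n-2 = Suc (n-3)" using n by auto
  have qn1: "qf (n-1) = qf (n-2) - qf (n-3)" unfolding e by (rule qf_rec)
  have lt: "n - 1 < n" "n - 2 < n" "n - 3 < n" "0 < n" "1 < n" using n by auto
  show ?thesis
  proof (rule kzI[OF n(1)])
    show "K1a n 1 + (1 + - 1) * K1a n 0 + c * (\<Sum>k<n+1. K1a n k) = 0"
      using lt sum0 unfolding K1a_def by simp
    show "K1a n (i-1) + K1a n (i+1) + (1 + 2 * - 1) * K1a n i + c * (\<Sum>k<n+1. K1a n k) = 0"
      if "1 \<le> i" "i \<le> n-3" for i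
    proof -
      have l: "i - 1 < n" "i + 1 < n" "i < n" using that n by auto
      have "qf (i+1) = qf i - qf (i-1)" using qf_rec[of "i-1"] that by (simp add: Suc_diff_1)
      then show ?thesis using l sum0 unfolding K1a_def by simp
    qed
    show "K1a n (n-3) + K1a n (n-1) + K1a n n + (1 + 3 * - 1) * K1a n (n-2) + c * (\<Sum>k<n+1. K1a n k) = 0"
      using lt sum0 qn1 qn2 unfolding K1a_def by simp
    show "K1a n (n-2) + (1 + - 1) * K1a n (n-1) + c * (\<Sum>k<n+1. K1a n k) = 0"
      using lt sum0 qn2 unfolding K1a_def by simp
    show "K1a n (n-2) + (1 + - 1) * K1a n n + c * (\<Sum>k<n+1. K1a n k) = 0"
      using lt sum0 qn2 unfolding K1a_def by simp
  qed
qed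

lemma kz_one: assumes n: "n \<ge> 3" shows "kz n 1 (- 1 / real (n+1)) (-1) (\<lambda>_. 1)"
proof (rule kzI[OF n])
  have S: "(- 1 / real (n+1)) * (\<Sum>k<n+1. (1::real)) = -1" by simp
  show "1 + (1 + - 1) * 1 + (- 1 / real (n+1)) * (\<Sum>k<n+1. (1::real)) = 0" unfolding S by simp
  show "1 + 1 + (1 + 2 * - 1) * 1 + (- 1 / real (n+1)) * (\<Sum>k<n+1. (1::real)) = 0" for i::nat unfolding S by simp
  show "1 + 1 + 1 + (1 + 3 * - 1) * 1 + (- 1 / real (n+1)) * (\<Sum>k<n+1. (1::real)) = 0" unfolding S by simp
  show "1 + (1 + - 1) * 1 + (- 1 / real (n+1)) * (\<Sum>k<n+1. (1::real)) = 0" unfolding S by simp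
  show "1 + (1 + - 1) * 1 + (- 1 / real (n+1)) * (\<Sum>k<n+1. (1::real)) = 0" unfolding S by simp
qed

definition K1b :: "nat \<Rightarrow> nat \<Rightarrow> real" where "K1b n i = (if i < n then rf i else 0)"
definition K3b :: "nat \<Rightarrow> nat \<Rightarrow> real" where "K3b n i = (if i < n then sf i else 0)"

lemma rf_rec: "rf (Suc (Suc m)) = - rf m" by simp
lemma sf_rec: "sf (Suc (Suc m)) = 1 - sf m" by simp

lemma kz_K1b: assumes n: "n = 4*j+3" "j \<ge> 1" shows "kz n 0 c 0 (K1b n)"
proof -
  have n3: "n \<ge> 3" using n by simp
  have sum0: "(\<Sum>k<n+1. K1b n k) = 0"
  proof -
    have "(\<Sum>k<n+1. K1b n k) = (\<Sum>k<n. rf k)" unfolding K1b_def by simp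
    also have "\<dots> = (\<Sum>k<4*j. rf k) + rf (4*j) + rf (Suc (4*j)) + rf (Suc (Suc (4*j)))"
      unfolding n by (simp add: numeral_3_eq_3)
    finally show ?thesis using rf_facts[of j] by simp
  qed
  have "n - 2 = 4*j+1" using n by simp
  then have rn2: "rf (n-2) = 0" using rf_facts[of j] by simp
  have e: "n-1 = Suc (Suc (n-3))" using n by auto
  have rn1: "rf (n-1) = - rf (n-3)" unfolding e by (rule rf_rec)
  have lt: "n - 1 < n" "n - 2 < n" "n - 3 < n" "0 < n" "1 < n" using n by auto
  show ?thesis
  proof (rule kzI[OF n3])
    show "K1b n 1 + (0 + 0) * K1b n 0 + c * (\<Sum>k<n+1. K1b n k) = 0"
      using lt sum0 unfolding K1b_def by simp
    show "K1b n (i-1) + K1b n (i+1) + (0 + 2 * 0) * K1b n i + c * (\<Sum>k<n+1. K1b n k) = 0"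
      if "1 \<le> i" "i \<le> n-3" for i
    proof -
      have l: "i - 1 < n" "i + 1 < n" using that n by auto
      have "rf (i+1) = - rf (i-1)" using rf_rec[of "i-1"] that by (simp add: Suc_diff_1)
      then show ?thesis using l sum0 unfolding K1b_def by simp
    qed
    show "K1b n (n-3) + K1b n (n-1) + K1b n n + (0 + 3 * 0) * K1b n (n-2) + c * (\<Sum>k<n+1. K1b n k) = 0"
      using lt sum0 rn1 unfolding K1b_def by simp
    show "K1b n (n-2) + (0 + 0) * K1b n (n-1) + c * (\<Sum>k<n+1. K1b n k) = 0"
      using lt sum0 rn2 unfolding K1b_def by simp
    show "K1b n (n-2) + (0 + 0) * K1b n n + c * (\<Sum>k<n+1. K1b n k) = 0"
      using lt sum0 rn2 unfolding K1b_def by simp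
  qed
qed

lemma kz_K3b: assumes n: "n = 4*j+3" "j \<ge> 1" shows "kz n 0 (- 2 / real (n+1)) 0 (K3b n)"
proof -
  have n3: "n \<ge> 3" using n by simp
  have sumS: "(\<Sum>k<n+1. K3b n k) = 2 * real j + 2"
  proof -
    have "(\<Sum>k<n+1. K3b n k) = (\<Sum>k<n. sf k)" unfolding K3b_def by simp
    also have "\<dots> = (\<Sum>k<4*j. sf k) + sf (4*j) + sf (Suc (4*j)) + sf (Suc (Suc (4*j)))"
      unfolding n by (simp add: numeral_3_eq_3)
    finally show ?thesis using sf_facts[of j] by simp
  qed
  have cS: "(- 2 / real (n+1)) * (\<Sum>k<n+1. K3b n k) = -1"
    unfolding sumS by (simp add: n field_simps)
  have "n - 2 = 4*j+1" using n by simp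
  then have sn2: "sf (n-2) = 1" using sf_facts[of j] by simp
  have e: "n-1 = Suc (Suc (n-3))" using n by auto
  have sn1: "sf (n-1) = 1 - sf (n-3)" unfolding e by (rule sf_rec)
  have lt: "n - 1 < n" "n - 2 < n" "n - 3 < n" "0 < n" "1 < n" using n by auto
  show ?thesis
  proof (rule kzI[OF n3])
    show "K3b n 1 + (0 + 0) * K3b n 0 + (- 2 / real (n+1)) * (\<Sum>k<n+1. K3b n k) = 0"
      using lt unfolding cS unfolding K3b_def by simp
    show "K3b n (i-1) + K3b n (i+1) + (0 + 2 * 0) * K3b n i + (- 2 / real (n+1)) * (\<Sum>k<n+1. K3b n k) = 0"
      if "1 \<le> i" "i \<le> n-3" for i
    proof -
      have l: "i - 1 < n" "i + 1 < n" using that n by auto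
      have "sf (i+1) = 1 - sf (i-1)" using sf_rec[of "i-1"] that by (simp add: Suc_diff_1)
      then show ?thesis using l unfolding cS unfolding K3b_def by simp
    qed
    show "K3b n (n-3) + K3b n (n-1) + K3b n n + (0 + 3 * 0) * K3b n (n-2) + (- 2 / real (n+1)) * (\<Sum>k<n+1. K3b n k) = 0"
      using lt sn1 unfolding cS unfolding K3b_def by simp
    show "K3b n (n-2) + (0 + 0) * K3b n (n-1) + (- 2 / real (n+1)) * (\<Sum>k<n+1. K3b n k) = 0"
      using lt sn2 unfolding cS unfolding K3b_def by simp
    show "K3b n (n-2) + (0 + 0) * K3b n n + (- 2 / real (n+1)) * (\<Sum>k<n+1. K3b n k) = 0"
      using lt sn2 unfolding cS unfolding K3b_def by simp
  qed
qed

lemma upper_general: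
  assumes n: "n \<ge> 3"
  and K: "\<And>j. j \<in> {0,1,n} \<Longrightarrow> \<exists>u. kz n b c d u \<and> u j = 1 \<and> (\<forall>p\<in>{0,1,n}. p \<noteq> j \<longrightarrow> u p = 0)"
  shows "mat_rank (univ_adj_mat (n+1) (Pprime_edge n) 1 b c d) \<le> n - 2"
proof -
  let ?M = "univ_adj_mat (n+1) (Pprime_edge n) 1 b c d"
  have MC: "?M \<in> carrier_mat (n+1) (n+1)" unfolding univ_eq using Bmat_carrier[of "n+1"]
    unfolding all_ones_mat_def by auto
  have "vec_space.rank (n+1) ?M \<le> (n+1) - 3"
  proof (rule vec_space.rank_upper[OF MC])
    show "4 \<le> n + 1" using n by simp
    fix j assume j: "j \<in> {0, 1, n + 1 - 1}"
    then have j': "j \<in> {0,1,n}" by simp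
    from K[OF j'] obtain u where u: "kz n b c d u" "u j = 1" "\<forall>p\<in>{0,1,n}. p \<noteq> j \<longrightarrow> u p = 0" by blast
    have "\<forall>i<n+1. (\<Sum>k<n+1. ?M $$ (i,k) * u k) = 0"
    proof (intro allI impI)
      fix i assume i: "i < n+1"
      show "(\<Sum>k<n+1. ?M $$ (i,k) * u k) = 0" unfolding row[OF n i] using u(1) i unfolding kz_def by simp
    qed
    then show "\<exists>u. (\<forall>i<n + 1. (\<Sum>k<n + 1. ?M $$ (i, k) * u k) = 0) \<and> u j = 1 \<and>
          (\<forall>p\<in>{0, 1, n + 1 - 1}. p \<noteq> j \<longrightarrow> u p = 0)" using u by auto
  qed
  moreover have "dim_row ?M = n+1" using MC by auto
  ultimately show ?thesis unfolding mat_rank_def by simp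
qed

lemma mur_eq:
  assumes n: "n \<ge> 3" and w: "mat_rank (univ_adj_mat (n+1) (Pprime_edge n) 1 b c d) \<le> n - 2"
  shows "mur (n+1) (Pprime_edge n) = n - 2"
proof -
  let ?S = "{mat_rank (univ_adj_mat (n+1) (Pprime_edge n) \<alpha> \<beta> \<gamma> \<delta>) | \<alpha> \<beta> \<gamma> \<delta>. \<alpha> \<noteq> 0}"
  have rk: "mat_rank (univ_adj_mat (n+1) (Pprime_edge n) \<alpha> \<beta> \<gamma> \<delta>) = vec_space.rank (n+1) (univ_adj_mat (n+1) (Pprime_edge n) \<alpha> \<beta> \<gamma> \<delta>)"
    for \<alpha> \<beta> \<gamma> \<delta>
  proof -
    have "univ_adj_mat (n+1) (Pprime_edge n) \<alpha> \<beta> \<gamma> \<delta> \<in> carrier_mat (n+1) (n+1)"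
      unfolding univ_eq using Bmat_carrier[of "n+1"] unfolding all_ones_mat_def by auto
    then show ?thesis unfolding mat_rank_def by simp
  qed
  have fin: "finite ?S"
  proof (rule finite_subset)
    show "?S \<subseteq> {..n+1}"
    proof
      fix x assume "x \<in> ?S"
      then obtain \<alpha> \<beta> \<gamma> \<delta> where x: "x = mat_rank (univ_adj_mat (n+1) (Pprime_edge n) \<alpha> \<beta> \<gamma> \<delta>)" by blast
      have "univ_adj_mat (n+1) (Pprime_edge n) \<alpha> \<beta> \<gamma> \<delta> \<in> carrier_mat (n+1) (n+1)"
        unfolding univ_eq using Bmat_carrier[of "n+1"] unfolding all_ones_mat_def by auto
      then have "vec_space.rank (n+1) (univ_adj_mat (n+1) (Pprime_edge n) \<alpha> \<beta> \<gamma> \<delta>) \<le> n+1"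
        by (rule vec_space.rank_le_nc)
      then show "x \<in> {..n+1}" unfolding x rk by simp
    qed
  qed simp
  show ?thesis unfolding mur_def
  proof (rule Min_eqI[OF fin])
    fix y assume "y \<in> ?S"
    then obtain \<alpha> \<beta> \<gamma> \<delta> where y: "y = mat_rank (univ_adj_mat (n+1) (Pprime_edge n) \<alpha> \<beta> \<gamma> \<delta>)" "\<alpha> \<noteq> 0" by blast
    show "n - 2 \<le> y" unfolding y(1) rk using rank_lower[OF n y(2)] .
  next
    have "n - 2 \<le> mat_rank (univ_adj_mat (n+1) (Pprime_edge n) 1 b c d)" unfolding rk
      using rank_lower[OF n, of 1] by simp
    then have "mat_rank (univ_adj_mat (n+1) (Pprime_edge n) 1 b c d) = n - 2" using w by simp
    then show "n - 2 \<in> ?S" by (metis (mono_tags, lifting) mem_Collect_eq one_neq_zero)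
  qed
qed

lemma case_a:
  assumes n: "n \<ge> 3" "n mod 3 = 0"
  shows "mur (n+1) (Pprime_edge n) = n - 2"
proof (rule mur_eq[OF n(1) upper_general[OF n(1)]])
  fix j :: nat assume j: "j \<in> {0,1,n}"
  let ?c = "- 1 / real (n+1)"
  have k1: "kz n 1 ?c (-1) (K1a n)" by (rule kz_K1a[OF n])
  have k2: "kz n 1 ?c (-1) (K2 n)" by (rule kz_K2[OF n(1)]) simp
  have k3: "kz n 1 ?c (-1) (\<lambda>_. 1)" by (rule kz_one[OF n(1)])
  have nn: "n - 1 \<noteq> 0" "n - 1 \<noteq> 1" "n \<noteq> 0" "n \<noteq> 1" "n - 1 \<noteq> n" "0 < n" "1 < n" using n by auto
  have v0: "K1a n 0 = 1" "K1a n 1 = 0" "K1a n n = 0" using nn unfolding K1a_def by auto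
  have w0: "K2 n 0 = 0" "K2 n 1 = 0" "K2 n n = -1" using nn unfolding K2_def by auto
  from j consider "j = 0" | "j = 1" | "j = n" by blast
  then show "\<exists>u. kz n 1 ?c (-1) u \<and> u j = 1 \<and> (\<forall>p\<in>{0,1,n}. p \<noteq> j \<longrightarrow> u p = 0)"
  proof cases
    case 1 then show ?thesis using k1 v0 nn by (intro exI[of _ "K1a n"]) auto
  next
    case 2
    have "kz n 1 ?c (-1) (\<lambda>k. 1 + - K1a n k + K2 n k)" by (rule kz_add[OF kz_add[OF k3 kz_neg[OF k1]] k2])
    then show ?thesis using 2 v0 w0 nn by (intro exI[of _ "\<lambda>k. 1 + - K1a n k + K2 n k"]) auto
  next
    case 3
    have "kz n 1 ?c (-1) (\<lambda>k. - K2 n k)" by (rule kz_neg[OF k2])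
    then show ?thesis using 3 w0 nn by (intro exI[of _ "\<lambda>k. - K2 n k"]) auto
  qed
qed

lemma case_b:
  assumes n: "n = 4*j+3" "j \<ge> 1"
  shows "mur (n+1) (Pprime_edge n) = n - 2"
proof -
  have n3: "n \<ge> 3" using n by simp
  show ?thesis
  proof (rule mur_eq[OF n3 upper_general[OF n3]])
    fix i :: nat assume i: "i \<in> {0,1,n}"
    let ?c = "- 2 / real (n+1)"
    have k1: "kz n 0 ?c 0 (K1b n)" by (rule kz_K1b[OF n])
    have k2: "kz n 0 ?c 0 (K2 n)" by (rule kz_K2[OF n3]) simp
    have k3: "kz n 0 ?c 0 (K3b n)" by (rule kz_K3b[OF n])
    have nn: "n - 1 \<noteq> 0" "n - 1 \<noteq> 1" "n \<noteq> 0" "n \<noteq> 1" "n - 1 \<noteq> n" "0 < n" "1 < n" using n by auto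
    have v0: "K1b n 0 = 1" "K1b n 1 = 0" "K1b n n = 0" using nn unfolding K1b_def by auto
    have v3: "K3b n 0 = 0" "K3b n 1 = 1" "K3b n n = 0" using nn unfolding K3b_def by auto
    have w0: "K2 n 0 = 0" "K2 n 1 = 0" "K2 n n = -1" using nn unfolding K2_def by auto
    from i consider "i = 0" | "i = 1" | "i = n" by blast
    then show "\<exists>u. kz n 0 ?c 0 u \<and> u i = 1 \<and> (\<forall>p\<in>{0,1,n}. p \<noteq> i \<longrightarrow> u p = 0)"
    proof cases
      case 1 then show ?thesis using k1 v0 nn by (intro exI[of _ "K1b n"]) auto
    next
      case 2 then show ?thesis using k3 v3 nn by (intro exI[of _ "K3b n"]) auto
    next
      case 3
      have "kz n 0 ?c 0 (\<lambda>k. - K2 n k)" by (rule kz_neg[OF k2])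
      then show ?thesis using 3 w0 nn by (intro exI[of _ "\<lambda>k. - K2 n k"]) auto
    qed
  qed
qed

theorem proposition27:
  fixes n :: nat
  shows "(n \<ge> 3 \<and> n mod 3 = 0 \<longrightarrow> mur (n + 1) (Pprime_edge n) = n - 2)
       \<and> (n \<ge> 6 \<and> (\<exists>k::int. int n + 1 = 4 * k) \<longrightarrow> mur (n + 1) (Pprime_edge n) = n - 2)"
proof (intro conjI impI)
  assume h: "n \<ge> 3 \<and> n mod 3 = 0"
  then have "n \<ge> 3" "n mod 3 = 0" by auto
  then show "mur (n + 1) (Pprime_edge n) = n - 2" by (rule case_a)
next
  assume a: "n \<ge> 6 \<and> (\<exists>k::int. int n + 1 = 4 * k)"
  then obtain k :: int where k: "int n + 1 = 4 * k" by blast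
  define j where "j = nat (k - 1)"
  have "n = 4*j+3" "j \<ge> 1" using a k unfolding j_def by auto
  then show "mur (n + 1) (Pprime_edge n) = n - 2" by (rule case_b)
qed

end
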